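(* Let $m$ be an odd positive integer and $q\geq 1$. Then $m*Q_q$ divides $Q_{mq}$.
   Context: $Q_q$ denotes the $q$-dimensional hypercube graph (vertices are $q$-tuples of $0$'s and $1$'s, adjacent iff they differ in exactly one coordinate). For a graph $G$ and positive integer $m$, the $m$-stretch $m*G$ is the graph obtained from $G$ by replacing each edge by a path with $m$ edges, these paths being internally vertex-disjoint. For graphs $H$ and $G$, "$H$ divides $G$" means there is a collection of subgraphs $H_i$ of $G$, each isomorphic to $H$, such that $E(G)$ is the disjoint union of the edge sets $E(H_i)$. *)

theory Defs
  imports Main
begin

text \<open>A (finite, simple, undirected) graph is represented as a pair (V, E) of a vertex
  set V and a set E of edges, each edge being a two-element set of vertices.\<close>

type_synonym 'a graph = "'a set \<times> 'a set set"

definition verts :: "'a graph \<Rightarrow> 'a set" where "verts G = fst G"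
definition edges :: "'a graph \<Rightarrow> 'a set set" where "edges G = snd G"

definition hypercube :: "nat \<Rightarrow> bool list graph" where
  "hypercube q =
    ({u. length u = q},
     {{u, v} | u v. length u = q \<and> length v = q \<and> card {i. i < q \<and> u ! i \<noteq> v ! i} = 1})"

definition edge_ends :: "'a set \<Rightarrow> 'a \<times> 'a" where
  "edge_ends e = (SOME p. e = {fst p, snd p})"

text \<open>The i-th vertex (0 \<le> i \<le> m) of the path of length m replacing edge e in the m-stretch:
  original vertices are tagged Inl, internal path vertices are Inr (e, i) with 0 < i < m.\<close>

definition stretch_pt :: "nat \<Rightarrow> 'a set \<Rightarrow> nat \<Rightarrow> 'a + ('a set \<times> nat)" where
  "stretch_pt m e i =
    (if i = 0 then Inl (fst (edge_ends e))
     else if i = m then Inl (snd (edge_ends e))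
     else Inr (e, i))"

definition stretch :: "nat \<Rightarrow> 'a graph \<Rightarrow> ('a + ('a set \<times> nat)) graph" where
  "stretch m G =
    (Inl ` verts G \<union> {Inr (e, i) | e i. e \<in> edges G \<and> 0 < i \<and> i < m},
     {{stretch_pt m e i, stretch_pt m e (Suc i)} | e i. e \<in> edges G \<and> i < m})"

definition subgraph :: "'a graph \<Rightarrow> 'a graph \<Rightarrow> bool" where
  "subgraph H G \<longleftrightarrow> verts H \<subseteq> verts G \<and> edges H \<subseteq> edges G \<and>
     (\<forall>e \<in> edges H. e \<subseteq> verts H)"

definition isomorphic :: "'b graph \<Rightarrow> 'a graph \<Rightarrow> bool" where
  "isomorphic H G \<longleftrightarrow> (\<exists>f. bij_betw f (verts H) (verts G) \<and>
     (\<forall>x \<in> verts H. \<forall>y \<in> verts H. {x, y} \<in> edges H \<longleftrightarrow> {f x, f y} \<in> edges G))"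

definition graph_divides :: "'b graph \<Rightarrow> 'a graph \<Rightarrow> bool" where
  "graph_divides H G \<longleftrightarrow> (\<exists>\<H> :: 'a graph set.
     (\<forall>Hi \<in> \<H>. subgraph Hi G \<and> isomorphic H Hi) \<and>
     (\<forall>Hi \<in> \<H>. \<forall>Hj \<in> \<H>. Hi \<noteq> Hj \<longrightarrow> edges Hi \<inter> edges Hj = {}) \<and>
     \<Union> (edges ` \<H>) = edges G)"

end

theory Submission
  imports Defs
begin


definition cnt :: "nat \<Rightarrow> (nat \<Rightarrow> bool) \<Rightarrow> nat" where
  "cnt m f = card {s. s < m \<and> f s}"

lemma cnt_cong: "(\<And>s. s < m \<Longrightarrow> f s = g s) \<Longrightarrow> cnt m f = cnt m g"
  unfolding cnt_def by (metis (mono_tags, lifting) Collect_cong)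

lemma cnt_le: "cnt m f \<le> m"
  unfolding cnt_def by (metis (no_types, lifting) card_lessThan card_mono finite_lessThan lessThan_iff mem_Collect_eq subsetI)

lemma cnt_not: "cnt m (\<lambda>s. \<not> f s) = m - cnt m f"
proof -
  have "{s. s < m \<and> \<not> f s} = {..<m} - {s. s < m \<and> f s}" by auto
  then show ?thesis unfolding cnt_def
    by (simp add: card_Diff_subset subset_eq)
qed

lemma cnt_xor:
  assumes "odd m" "\<And>s. s < m \<Longrightarrow> g s = (f s \<noteq> b)"
  shows "odd (cnt m g) = (odd (cnt m f) \<noteq> b)"
proof (cases b)
  case True
  then have "cnt m g = cnt m (\<lambda>s. \<not> f s)" using assms(2) by (intro cnt_cong) auto
  also have "\<dots> = m - cnt m f" by (rule cnt_not)
  finally show ?thesis using True assms(1) cnt_le[of m f] by (auto simp: even_diff_nat)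
next
  case False
  then have "cnt m g = cnt m f" using assms(2) by (intro cnt_cong) auto
  then show ?thesis using False by simp
qed

lemma cnt_flip1:
  assumes "c < m" "g c \<noteq> f c" "\<And>s. s < m \<Longrightarrow> s \<noteq> c \<Longrightarrow> g s = f s"
  shows "odd (cnt m g) \<longleftrightarrow> \<not> odd (cnt m f)"
proof -
  let ?S = "{s. s < m \<and> s \<noteq> c \<and> f s}"
  have fin: "finite ?S" by auto
  have "{s. s < m \<and> f s} = (if f c then insert c ?S else ?S)" using assms(1) by auto
  moreover have "{s. s < m \<and> g s} = (if g c then insert c ?S else ?S)" using assms by auto
  ultimately show ?thesis unfolding cnt_def using assms(2) fin
    by (cases "f c") auto
qed



lemma edge_ends_dbl: "edge_ends {u, v} = (u, v) \<or> edge_ends {u, v} = (v, u)"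
proof -
  have "\<exists>p. {u, v} = {fst p, snd p}" by (rule exI[of _ "(u,v)"]) simp
  then have "{u, v} = {fst (edge_ends {u,v}), snd (edge_ends {u,v})}"
    unfolding edge_ends_def by (rule someI_ex)
  then show ?thesis by (metis doubleton_eq_iff prod.collapse)
qed

lemma hyp_edge_iff:
  "e \<in> edges (hypercube q) \<longleftrightarrow> (\<exists>u v. e = {u, v} \<and> length u = q \<and> length v = q \<and>
      card {i. i < q \<and> u ! i \<noteq> v ! i} = 1)"
  unfolding hypercube_def edges_def by auto

lemma hyp_verts: "verts (hypercube q) = {u. length u = q}"
  unfolding hypercube_def verts_def by auto

lemma card1_diff:
  assumes "card {i. i < q \<and> u ! i \<noteq> v ! i} = 1"
  obtains j where "j < q" "u ! j \<noteq> v ! j" "\<And>t. t < q \<Longrightarrow> t \<noteq> j \<Longrightarrow> u ! t = v ! t"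
proof -
  from assms obtain j where "{i. i < q \<and> u ! i \<noteq> v ! i} = {j}" by (auto simp: card_1_singleton_iff)
  then show ?thesis using that by (metis (mono_tags, lifting) insertI1 mem_Collect_eq singletonD)
qed

lemma hyp_edge_ends:
  assumes "e \<in> edges (hypercube q)"
  obtains u0 u1 j where "edge_ends e = (u0, u1)" "e = {u0, u1}" "length u0 = q" "length u1 = q"
    "j < q" "u0 ! j \<noteq> u1 ! j" "\<And>t. t < q \<Longrightarrow> t \<noteq> j \<Longrightarrow> u0 ! t = u1 ! t"
proof -
  from assms obtain u v where uv: "e = {u, v}" "length u = q" "length v = q"
      "card {i. i < q \<and> u ! i \<noteq> v ! i} = 1" by (auto simp: hyp_edge_iff)
  then obtain j where j: "j < q" "u ! j \<noteq> v ! j" "\<And>t. t < q \<Longrightarrow> t \<noteq> j \<Longrightarrow> u ! t = v ! t"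
    using card1_diff[OF uv(4)] by blast
  from edge_ends_dbl[of u v] show ?thesis
  proof
    assume "edge_ends {u, v} = (u, v)"
    then show ?thesis using that[of u v j] uv j by auto
  next
    assume "edge_ends {u, v} = (v, u)"
    then show ?thesis using that[of v u j] uv j by (metis insert_commute)
  qed
qed

lemma card_single_eq: "S = {a} \<Longrightarrow> card S = 1" by simp



definition Fv :: "nat \<Rightarrow> nat \<Rightarrow> bool list \<Rightarrow> bool list \<Rightarrow> bool list" where
  "Fv m q A u = map (\<lambda>n. A ! n \<noteq> u ! (n div m)) [0..<m*q]"

definition Qp :: "nat \<Rightarrow> nat \<Rightarrow> bool list \<Rightarrow> bool list \<times> bool list \<Rightarrow> nat \<Rightarrow> bool list" where
  "Qp m q A p i = map (\<lambda>n. A ! n \<noteq> (fst p ! (n div m) \<noteq> (fst p ! (n div m) \<noteq> snd p ! (n div m) \<and> n mod m < i))) [0..<m*q]"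

definition phi :: "nat \<Rightarrow> nat \<Rightarrow> bool list \<Rightarrow> bool list + (bool list set \<times> nat) \<Rightarrow> bool list" where
  "phi m q A v = (case v of Inl u \<Rightarrow> Fv m q A u | Inr ei \<Rightarrow> Qp m q A (edge_ends (fst ei)) (snd ei))"

lemma len_Fv[simp]: "length (Fv m q A u) = m*q" by (simp add: Fv_def)
lemma len_Qp[simp]: "length (Qp m q A p i) = m*q" by (simp add: Qp_def)

lemma idx_lt: "(t::nat) < q \<Longrightarrow> s < m \<Longrightarrow> t*m + s < m*q"
proof -
  assume "t < q" "s < m"
  then have "t*m + s < t*m + m" by linarith
  also have "\<dots> = (Suc t)*m" by simp
  also have "\<dots> \<le> q*m" using \<open>t<q\<close> by (intro mult_le_mono1) simp
  finally show ?thesis by (simp add: mult.commute)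
qed

lemma idx_div: "(s::nat) < m \<Longrightarrow> (t*m + s) div m = t" by simp
lemma idx_mod: "(s::nat) < m \<Longrightarrow> (t*m + s) mod m = s" by simp

lemma Fv_nth: "t < q \<Longrightarrow> s < m \<Longrightarrow> Fv m q A u ! (t*m+s) = (A ! (t*m+s) \<noteq> u ! t)"
  using idx_lt[of t q s m] by (simp add: Fv_def)

lemma Qp_nth: "t < q \<Longrightarrow> s < m \<Longrightarrow> Qp m q A p i ! (t*m+s) =
   (A ! (t*m+s) \<noteq> (fst p ! t \<noteq> (fst p ! t \<noteq> snd p ! t \<and> s < i)))"
  using idx_lt[of t q s m] by (simp add: Qp_def)

lemma decomp: "(n::nat) < m*q \<Longrightarrow> n div m < q \<and> n mod m < m \<and> n = (n div m)*m + n mod m"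
proof -
  assume n: "n < m*q"
  then have "0 < m" by (cases m) auto
  then show ?thesis using n by (simp add: less_mult_imp_div_less mult.commute)
qed

lemma list_eq_blocks:
  assumes "length x = m*q" "length y = m*q" "\<And>t s. t < q \<Longrightarrow> s < m \<Longrightarrow> x ! (t*m+s) = y ! (t*m+s)"
  shows "x = y"
proof (rule nth_equalityI)
  show "length x = length y" using assms by simp
  fix n assume "n < length x"
  then have "n < m*q" using assms by simp
  then show "x ! n = y ! n" using decomp[of n m q] assms(3) by metis
qed

lemma stretch_verts: "verts (stretch m G) = Inl ` verts G \<union> {Inr (e, i) | e i. e \<in> edges G \<and> 0 < i \<and> i < m}"
  by (simp add: stretch_def verts_def)
lemma stretch_edges: "edges (stretch m G) = {{stretch_pt m e i, stretch_pt m e (Suc i)} | e i. e \<in> edges G \<and> i < m}"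
  by (simp add: stretch_def edges_def)

lemma phi_pt:
  assumes "e \<in> edges (hypercube q)" "i \<le> m" "0 < m"
  shows "phi m q A (stretch_pt m e i) = Qp m q A (edge_ends e) i"
proof -
  obtain u0 u1 j where E: "edge_ends e = (u0, u1)" "e = {u0, u1}" "length u0 = q" "length u1 = q"
    "j < q" "u0 ! j \<noteq> u1 ! j" "\<And>t. t < q \<Longrightarrow> t \<noteq> j \<Longrightarrow> u0 ! t = u1 ! t"
    using hyp_edge_ends[OF assms(1)] by metis
  show ?thesis
  proof (cases "i = 0")
    case True
    then show ?thesis by (simp add: stretch_pt_def phi_def E(1) Fv_def Qp_def)
  next
    case False
    show ?thesis
    proof (cases "i = m")
      case True
      have "Fv m q A u1 = Qp m q A (u0, u1) m"
        unfolding Fv_def Qp_def using assms(3) by (auto intro!: map_cong)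
      then show ?thesis using True False by (simp add: stretch_pt_def phi_def E(1))
    next
      case False
      then show ?thesis using \<open>i \<noteq> 0\<close> by (simp add: stretch_pt_def phi_def)
    qed
  qed
qed



lemma blk_cases:
  assumes "(n::nat) < m*q"
  obtains t s where "t < q" "s < m" "n = t*m + s"
  using decomp[OF assms] by metis

lemma Qp_edge:
  assumes "e \<in> edges (hypercube q)" "i < m"
  shows "{Qp m q A (edge_ends e) i, Qp m q A (edge_ends e) (Suc i)} \<in> edges (hypercube (m*q))"
proof -
  obtain u0 u1 j where E: "edge_ends e = (u0, u1)" "e = {u0, u1}" "length u0 = q" "length u1 = q"
    "j < q" "u0 ! j \<noteq> u1 ! j" "\<And>t. t < q \<Longrightarrow> t \<noteq> j \<Longrightarrow> u0 ! t = u1 ! t"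
    using hyp_edge_ends[OF assms(1)] by metis
  let ?X = "Qp m q A (edge_ends e) i" and ?Y = "Qp m q A (edge_ends e) (Suc i)"
  have "{n. n < m*q \<and> ?X ! n \<noteq> ?Y ! n} = {j*m+i}"
  proof (intro equalityI subsetI)
    fix n assume "n \<in> {n. n < m*q \<and> ?X ! n \<noteq> ?Y ! n}"
    then have n: "n < m*q" "?X ! n \<noteq> ?Y ! n" by auto
    obtain t s where ts: "t < q" "s < m" "n = t*m + s" using blk_cases[OF n(1)] by metis
    have "u0 ! t \<noteq> u1 ! t \<and> s = i" using n(2) unfolding ts(3) Qp_nth[OF ts(1,2)] E(1)
      by auto
    then have "t = j" using E(7) ts(1) by blast
    then show "n \<in> {j*m+i}" using ts \<open>u0 ! t \<noteq> u1 ! t \<and> s = i\<close> by simp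
  next
    fix n assume "n \<in> {j*m+i}"
    then show "n \<in> {n. n < m*q \<and> ?X ! n \<noteq> ?Y ! n}"
      using idx_lt[OF E(5) assms(2)] Qp_nth[OF E(5) assms(2)] E(1) E(6) by auto
  qed
  then have "card {n. n < m*q \<and> ?X ! n \<noteq> ?Y ! n} = 1" by simp
  then show ?thesis unfolding hyp_edge_iff by (intro exI[of _ ?X] exI[of _ ?Y]) simp
qed

lemma phi_inj:
  assumes "0 < m"
  shows "inj_on (phi m q A) (verts (stretch m (hypercube q)))"
proof (rule inj_onI)
  fix x y assume xV: "x \<in> verts (stretch m (hypercube q))" and yV: "y \<in> verts (stretch m (hypercube q))"
    and eq: "phi m q A x = phi m q A y"
  have Fv_Qp: False if P: "length u = q" "e \<in> edges (hypercube q)" "0 < i" "i < m"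
      "Fv m q A u = Qp m q A (edge_ends e) i" for u e i
  proof -
    obtain u0 u1 j where E: "edge_ends e = (u0, u1)" "e = {u0, u1}" "length u0 = q" "length u1 = q"
      "j < q" "u0 ! j \<noteq> u1 ! j" "\<And>t. t < q \<Longrightarrow> t \<noteq> j \<Longrightarrow> u0 ! t = u1 ! t"
      using hyp_edge_ends[OF P(2)] by metis
    have a: "Fv m q A u ! (j*m+0) = Qp m q A (edge_ends e) i ! (j*m+0)" using P(5) by simp
    have b: "Fv m q A u ! (j*m+(m-1)) = Qp m q A (edge_ends e) i ! (j*m+(m-1))" using P(5) by simp
    from a have "u ! j = (\<not> u0 ! j)" using Fv_nth[OF E(5) assms] Qp_nth[OF E(5) assms] E(1,6) P(3)
      by auto
    moreover from b have "u ! j = u0 ! j" using Fv_nth[OF E(5), of "m-1"] Qp_nth[OF E(5), of "m-1"] E(1,6) P(4) assms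
      by auto
    ultimately show False by simp
  qed
  have Qp_Qp: "e = e' \<and> i = i'" if P: "e \<in> edges (hypercube q)" "0 < i" "i < m"
      "e' \<in> edges (hypercube q)" "0 < i'" "i' < m"
      "Qp m q A (edge_ends e) i = Qp m q A (edge_ends e') i'" for e i e' i'
  proof -
    obtain u0 u1 j where E: "edge_ends e = (u0, u1)" "e = {u0, u1}" "length u0 = q" "length u1 = q"
      "j < q" "u0 ! j \<noteq> u1 ! j" "\<And>t. t < q \<Longrightarrow> t \<noteq> j \<Longrightarrow> u0 ! t = u1 ! t"
      using hyp_edge_ends[OF P(1)] by metis
    obtain v0 v1 j' where E': "edge_ends e' = (v0, v1)" "e' = {v0, v1}" "length v0 = q" "length v1 = q"
      "j' < q" "v0 ! j' \<noteq> v1 ! j'" "\<And>t. t < q \<Longrightarrow> t \<noteq> j' \<Longrightarrow> v0 ! t = v1 ! t"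
      using hyp_edge_ends[OF P(4)] by metis
    have nth: "(u0 ! t \<noteq> (u0 ! t \<noteq> u1 ! t \<and> s < i)) = (v0 ! t \<noteq> (v0 ! t \<noteq> v1 ! t \<and> s < i'))"
      if Q: "t < q" "s < m" for t s
    proof -
      have "Qp m q A (edge_ends e) i ! (t*m+s) = Qp m q A (edge_ends e') i' ! (t*m+s)"
        using \<open>Qp m q A (edge_ends e) i = Qp m q A (edge_ends e') i'\<close> by simp
      then show ?thesis using Qp_nth[OF Q] E(1) E'(1) by auto
    qed
    have jj: "j = j'"
    proof (rule ccontr)
      assume "j \<noteq> j'"
      then have "v0 ! j = v1 ! j" using E'(7) E(5) by blast
      then show False using nth[OF E(5) assms] nth[OF E(5), of "m-1"] E(6) P(2,3) assms by auto
    qed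
    have u0v0: "u0 = v0"
    proof (rule nth_equalityI)
      show "length u0 = length v0" using E(3) E'(3) by simp
      fix t assume "t < length u0"
      then have t: "t < q" using E(3) by simp
      show "u0 ! t = v0 ! t"
      proof (cases "t = j")
        case True
        then show ?thesis using nth[OF t assms] E(6) E'(6) jj P(2,5) by auto
      next
        case False
        then show ?thesis using nth[OF t assms] E(7)[OF t] E'(7)[OF t] jj by auto
      qed
    qed
    have u1v1: "u1 = v1"
    proof (rule nth_equalityI)
      show "length u1 = length v1" using E(4) E'(4) by simp
      fix t assume "t < length u1"
      then have t: "t < q" using E(4) by simp
      show "u1 ! t = v1 ! t"
      proof (cases "t = j")
        case True
        then show ?thesis using E(6) E'(6) jj u0v0 by auto
      next
        case False
        then show ?thesis using E(7)[OF t] E'(7)[OF t] jj u0v0 by auto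
      qed
    qed
    have ii: "i = i'"
    proof (rule ccontr)
      assume "i \<noteq> i'"
      then have "min i i' < m" "(min i i' < i) \<noteq> (min i i' < i')" using P(3,6) by auto
      then show False using nth[OF E(5), of "min i i'"] E(6) E'(6) jj u0v0 u1v1 by auto
    qed
    show ?thesis using E(2) E'(2) u0v0 u1v1 ii by simp
  qed
  from xV yV eq show "x = y"
    unfolding stretch_verts hyp_verts
  proof (elim UnE imageE CollectE exE conjE)
    fix u v assume "length u = q" "x = Inl u" "length v = q" "y = Inl v"
      "phi m q A x = phi m q A y"
    then have eq': "Fv m q A u = Fv m q A v" by (simp add: phi_def)
    have "u = v"
    proof (rule nth_equalityI)
      show "length u = length v" using \<open>length u = q\<close> \<open>length v = q\<close> by simp
      fix t assume "t < length u"
      then have t: "t < q" using \<open>length u = q\<close> by simp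
      have "Fv m q A u ! (t*m+0) = Fv m q A v ! (t*m+0)" using eq' by simp
      then show "u ! t = v ! t" using Fv_nth[OF t assms] by auto
    qed
    then show "x = y" using \<open>x = Inl u\<close> \<open>y = Inl v\<close> by simp
  next
    fix u e i assume "length u = q" "x = Inl u" "y = Inr (e, i)" "e \<in> edges (hypercube q)"
      "0 < i" "i < m" "phi m q A x = phi m q A y"
    then show "x = y" using Fv_Qp[of u e i] by (simp add: phi_def)
  next
    fix u e i assume "length u = q" "y = Inl u" "x = Inr (e, i)" "e \<in> edges (hypercube q)"
      "0 < i" "i < m" "phi m q A x = phi m q A y"
    then show "x = y" using Fv_Qp[of u e i] by (simp add: phi_def)
  next
    fix e i e' i' assume "x = Inr (e, i)" "e \<in> edges (hypercube q)" "0 < i" "i < m"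
      "y = Inr (e', i')" "e' \<in> edges (hypercube q)" "0 < i'" "i' < m" "phi m q A x = phi m q A y"
    then show "x = y" using Qp_Qp[of e i e' i'] by (simp add: phi_def)
  qed
qed



definition Hc :: "nat \<Rightarrow> nat \<Rightarrow> bool list \<Rightarrow> bool list graph" where
  "Hc m q A = (phi m q A ` verts (stretch m (hypercube q)),
               (\<lambda>e. phi m q A ` e) ` edges (stretch m (hypercube q)))"

lemma Hc_verts: "verts (Hc m q A) = phi m q A ` verts (stretch m (hypercube q))"
  by (simp add: Hc_def verts_def)
lemma Hc_edges: "edges (Hc m q A) = (\<lambda>e. phi m q A ` e) ` edges (stretch m (hypercube q))"
  by (simp add: Hc_def edges_def)

lemma pt_in_V:
  assumes "e \<in> edges (hypercube q)" "i \<le> m"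
  shows "stretch_pt m e i \<in> verts (stretch m (hypercube q))"
proof -
  obtain u0 u1 j where E: "edge_ends e = (u0, u1)" "e = {u0, u1}" "length u0 = q" "length u1 = q"
    using hyp_edge_ends[OF assms(1)] by metis
  show ?thesis using assms E(1,3,4)
    unfolding stretch_verts hyp_verts stretch_pt_def by auto
qed

lemma stretch_edge_sub:
  assumes "x \<in> edges (stretch m (hypercube q))"
  shows "x \<subseteq> verts (stretch m (hypercube q))"
  using assms pt_in_V unfolding stretch_edges by fastforce

lemma phi_len: "phi m q A v \<in> {u. length u = m*q}"
  by (cases v) (auto simp: phi_def)

lemma Hc_edge_form:
  assumes "g \<in> edges (Hc m q A)" "0 < m"
  obtains e i where "e \<in> edges (hypercube q)" "i < m"
    "g = {Qp m q A (edge_ends e) i, Qp m q A (edge_ends e) (Suc i)}"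
proof -
  from assms(1) obtain e i where "e \<in> edges (hypercube q)" "i < m"
    "g = phi m q A ` {stretch_pt m e i, stretch_pt m e (Suc i)}"
    unfolding Hc_edges stretch_edges by auto
  then show ?thesis using that phi_pt[of e q i m A] phi_pt[of e q "Suc i" m A] assms(2) by auto
qed

lemma Hc_sub:
  assumes "0 < m"
  shows "subgraph (Hc m q A) (hypercube (m*q))"
  unfolding subgraph_def
proof (intro conjI ballI)
  show "verts (Hc m q A) \<subseteq> verts (hypercube (m * q))"
    unfolding Hc_verts hyp_verts using phi_len by blast
  show "edges (Hc m q A) \<subseteq> edges (hypercube (m * q))"
  proof
    fix g assume "g \<in> edges (Hc m q A)"
    then obtain e i where "e \<in> edges (hypercube q)" "i < m"
      "g = {Qp m q A (edge_ends e) i, Qp m q A (edge_ends e) (Suc i)}"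
      using Hc_edge_form assms by metis
    then show "g \<in> edges (hypercube (m * q))" using Qp_edge by metis
  qed
  fix g assume "g \<in> edges (Hc m q A)"
  then show "g \<subseteq> verts (Hc m q A)"
    unfolding Hc_edges Hc_verts using stretch_edge_sub by blast
qed

lemma Hc_iso:
  assumes "0 < m"
  shows "isomorphic (stretch m (hypercube q)) (Hc m q A)"
  unfolding isomorphic_def
proof (intro exI[of _ "phi m q A"] conjI ballI)
  have inj: "inj_on (phi m q A) (verts (stretch m (hypercube q)))" by (rule phi_inj[OF assms])
  then show "bij_betw (phi m q A) (verts (stretch m (hypercube q))) (verts (Hc m q A))"
    unfolding Hc_verts by (simp add: bij_betw_def)
  fix x y assume x: "x \<in> verts (stretch m (hypercube q))" and y: "y \<in> verts (stretch m (hypercube q))"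
  show "{x, y} \<in> edges (stretch m (hypercube q)) \<longleftrightarrow> {phi m q A x, phi m q A y} \<in> edges (Hc m q A)"
  proof
    assume "{x, y} \<in> edges (stretch m (hypercube q))"
    then show "{phi m q A x, phi m q A y} \<in> edges (Hc m q A)"
      unfolding Hc_edges by (metis image_empty image_eqI image_insert)
  next
    assume "{phi m q A x, phi m q A y} \<in> edges (Hc m q A)"
    then obtain e' where e': "e' \<in> edges (stretch m (hypercube q))" "{phi m q A x, phi m q A y} = phi m q A ` e'"
      unfolding Hc_edges by auto
    then have "phi m q A ` {x, y} = phi m q A ` e'" by simp
    moreover have "{x, y} \<subseteq> verts (stretch m (hypercube q))" using x y by simp
    moreover have "e' \<subseteq> verts (stretch m (hypercube q))" using stretch_edge_sub e'(1) by blast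
    ultimately have "{x, y} = e'" using inj_on_image_eq_iff[OF inj] by metis
    then show "{x, y} \<in> edges (stretch m (hypercube q))" using e'(1) by simp
  qed
qed



definition bodd :: "nat \<Rightarrow> bool list \<Rightarrow> nat \<Rightarrow> bool" where
  "bodd m x t = odd (cnt m (\<lambda>s. x ! (t*m+s)))"

definition Copies :: "nat \<Rightarrow> nat \<Rightarrow> bool list set" where
  "Copies m q = {A. length A = m*q \<and> (\<forall>t<q. \<not> bodd m A t)}"

lemma Qp_diff:
  assumes "j < q" "u0 ! j \<noteq> u1 ! j" "\<And>t. t < q \<Longrightarrow> t \<noteq> j \<Longrightarrow> u0 ! t = u1 ! t" "i < m"
  shows "{n. n < m*q \<and> Qp m q A (u0,u1) i ! n \<noteq> Qp m q A (u0,u1) (Suc i) ! n} = {j*m+i}"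
proof (intro equalityI subsetI)
  fix n assume "n \<in> {n. n < m*q \<and> Qp m q A (u0,u1) i ! n \<noteq> Qp m q A (u0,u1) (Suc i) ! n}"
  then have n: "n < m*q" "Qp m q A (u0,u1) i ! n \<noteq> Qp m q A (u0,u1) (Suc i) ! n" by auto
  obtain t s where ts: "t < q" "s < m" "n = t*m + s" using blk_cases[OF n(1)] by metis
  have "u0 ! t \<noteq> u1 ! t \<and> s = i" using n(2) unfolding ts(3) Qp_nth[OF ts(1,2)] by auto
  then have "t = j" using assms(3) ts(1) by blast
  then show "n \<in> {j*m+i}" using ts \<open>u0 ! t \<noteq> u1 ! t \<and> s = i\<close> by simp
next
  fix n assume "n \<in> {j*m+i}"
  then show "n \<in> {n. n < m*q \<and> Qp m q A (u0,u1) i ! n \<noteq> Qp m q A (u0,u1) (Suc i) ! n}"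
    using idx_lt[OF assms(1,4)] Qp_nth[OF assms(1,4)] assms(2) by auto
qed

lemma Qp_bodd:
  assumes "odd m" "A \<in> Copies m q" "t < q" "u0 ! t = u1 ! t"
  shows "bodd m (Qp m q A (u0,u1) i) t = u0 ! t"
proof -
  have "odd (cnt m (\<lambda>s. Qp m q A (u0,u1) i ! (t*m+s))) = (odd (cnt m (\<lambda>s. A ! (t*m+s))) \<noteq> u0 ! t)"
    using assms(1) by (rule cnt_xor) (simp add: Qp_nth[OF assms(3)] assms(4))
  then show ?thesis using assms(2,3) unfolding bodd_def Copies_def by auto
qed



lemma uniq:
  assumes "odd m" "0 < m" "A \<in> Copies m q" "A' \<in> Copies m q"
    "g \<in> edges (Hc m q A)" "g \<in> edges (Hc m q A')"
  shows "A = A'"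
proof -
  obtain e i where ei: "e \<in> edges (hypercube q)" "i < m"
    "g = {Qp m q A (edge_ends e) i, Qp m q A (edge_ends e) (Suc i)}"
    using Hc_edge_form[OF assms(5,2)] by metis
  obtain e' i' where ei': "e' \<in> edges (hypercube q)" "i' < m"
    "g = {Qp m q A' (edge_ends e') i', Qp m q A' (edge_ends e') (Suc i')}"
    using Hc_edge_form[OF assms(6,2)] by metis
  obtain u0 u1 j where E: "edge_ends e = (u0, u1)" "e = {u0, u1}" "length u0 = q" "length u1 = q"
    "j < q" "u0 ! j \<noteq> u1 ! j" "\<And>t. t < q \<Longrightarrow> t \<noteq> j \<Longrightarrow> u0 ! t = u1 ! t"
    using hyp_edge_ends[OF ei(1)] by metis
  obtain v0 v1 j' where E': "edge_ends e' = (v0, v1)" "e' = {v0, v1}" "length v0 = q" "length v1 = q"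
    "j' < q" "v0 ! j' \<noteq> v1 ! j'" "\<And>t. t < q \<Longrightarrow> t \<noteq> j' \<Longrightarrow> v0 ! t = v1 ! t"
    using hyp_edge_ends[OF ei'(1)] by metis
  define P where "P = Qp m q A (u0,u1) i"
  define P' where "P' = Qp m q A (u0,u1) (Suc i)"
  define R where "R = Qp m q A' (v0,v1) i'"
  define R' where "R' = Qp m q A' (v0,v1) (Suc i')"
  have gg: "{P, P'} = {R, R'}" using ei(3) ei'(3) E(1) E'(1) unfolding P_def P'_def R_def R'_def by simp
  have D1: "{n. n < m*q \<and> P ! n \<noteq> P' ! n} = {j*m+i}" unfolding P_def P'_def
    by (rule Qp_diff[OF E(5,6,7) ei(2)])
  have D2: "{n. n < m*q \<and> R ! n \<noteq> R' ! n} = {j'*m+i'}" unfolding R_def R'_def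
    by (rule Qp_diff[OF E'(5,6,7) ei'(2)])
  have cases: "(P = R \<and> P' = R') \<or> (P = R' \<and> P' = R)" using gg by (auto simp: doubleton_eq_iff)
  have "{n. n < m*q \<and> P ! n \<noteq> P' ! n} = {n. n < m*q \<and> R ! n \<noteq> R' ! n}"
    using cases by auto
  then have "j*m+i = j'*m+i'" using D1 D2 by simp
  then have jj: "j = j'" and ii: "i = i'"
    using ei(2) ei'(2) by (metis idx_div, metis idx_mod)
  have off: "u0 ! t = v0 ! t" if t: "t < q" "t \<noteq> j" for t
  proof -
    have bP: "bodd m P t = u0 ! t" unfolding P_def by (rule Qp_bodd[OF assms(1,3) t(1) E(7)[OF t]])
    have bP': "bodd m P' t = u0 ! t" unfolding P'_def by (rule Qp_bodd[OF assms(1,3) t(1) E(7)[OF t]])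
    have bR: "bodd m R t = v0 ! t" unfolding R_def by (rule Qp_bodd[OF assms(1,4) t(1) E'(7)]) (use t jj in auto)
    have bR': "bodd m R' t = v0 ! t" unfolding R'_def by (rule Qp_bodd[OF assms(1,4) t(1) E'(7)]) (use t jj in auto)
    show ?thesis using cases bP bP' bR bR' by auto
  qed
  have ee: "e = e'"
  proof (cases "u0 ! j = v0 ! j")
    case True
    have "u0 = v0" by (rule nth_equalityI) (use E(3) E'(3) off True in auto)
    moreover have "u1 = v1"
    proof (rule nth_equalityI)
      show "length u1 = length v1" using E(4) E'(4) by simp
      fix t assume "t < length u1"
      then have t: "t < q" using E(4) by simp
      show "u1 ! t = v1 ! t"
      proof (cases "t = j")
        case True
        then show ?thesis using E(6) E'(6) jj \<open>u0 ! j = v0 ! j\<close> by auto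
      next
        case False
        then show ?thesis using E(7)[OF t] E'(7)[OF t] jj off[OF t] by auto
      qed
    qed
    ultimately show ?thesis using E(2) E'(2) by simp
  next
    case False
    have "u0 = v1"
    proof (rule nth_equalityI)
      show "length u0 = length v1" using E(3) E'(4) by simp
      fix t assume "t < length u0"
      then have t: "t < q" using E(3) by simp
      show "u0 ! t = v1 ! t"
      proof (cases "t = j")
        case True
        then show ?thesis using E'(6) jj False by auto
      next
        case False
        then show ?thesis using E'(7)[OF t] jj off[OF t] by auto
      qed
    qed
    moreover have "u1 = v0"
    proof (rule nth_equalityI)
      show "length u1 = length v0" using E(4) E'(3) by simp
      fix t assume "t < length u1"
      then have t: "t < q" using E(4) by simp
      show "u1 ! t = v0 ! t"
      proof (cases "t = j")
        case True
        then show ?thesis using E(6) jj False by auto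
      next
        case False
        then show ?thesis using E(7)[OF t] jj off[OF t] by auto
      qed
    qed
    ultimately show ?thesis using E(2) E'(2) by auto
  qed
  then have uv: "u0 = v0" "u1 = v1" using E(1) E'(1) by auto
  have K: "P ! (t*m+s) = (A ! (t*m+s) \<noteq> (u0 ! t \<noteq> (u0 ! t \<noteq> u1 ! t \<and> s < i)))"
    "R ! (t*m+s) = (A' ! (t*m+s) \<noteq> (u0 ! t \<noteq> (u0 ! t \<noteq> u1 ! t \<and> s < i)))"
    "R' ! (t*m+s) = (A' ! (t*m+s) \<noteq> (u0 ! t \<noteq> (u0 ! t \<noteq> u1 ! t \<and> s < Suc i)))"
    if "t < q" "s < m" for t s
    unfolding P_def R_def R'_def using Qp_nth[OF that] uv ii by auto
  from cases show ?thesis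
  proof
    assume "P = R \<and> P' = R'"
    then have "P = R" by simp
    show ?thesis
      by (rule list_eq_blocks[of _ m q]) (use assms(3,4) K \<open>P = R\<close> in \<open>auto simp: Copies_def\<close>)
  next
    assume "P = R' \<and> P' = R"
    then have PR: "P = R'" by simp
    have "odd (cnt m (\<lambda>s. A ! (j*m+s))) \<longleftrightarrow> \<not> odd (cnt m (\<lambda>s. A' ! (j*m+s)))"
    proof (rule cnt_flip1[OF ei(2)])
      show "A ! (j*m+i) \<noteq> A' ! (j*m+i)" using K[OF E(5) ei(2)] PR E(6) by auto
      fix s assume "s < m" "s \<noteq> i"
      then show "A ! (j*m+s) = A' ! (j*m+s)" using K[OF E(5), of s] PR E(6) by auto
    qed
    then show ?thesis using assms(3,4) E(5) unfolding Copies_def bodd_def by auto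
  qed
qed



lemma cover:
  assumes "odd m" "0 < m" "g \<in> edges (hypercube (m*q))"
  shows "\<exists>A \<in> Copies m q. g \<in> edges (Hc m q A)"
proof -
  obtain x y where xy: "g = {x, y}" "length x = m*q" "length y = m*q"
      "card {i. i < m*q \<and> x ! i \<noteq> y ! i} = 1" using assms(3) by (auto simp: hyp_edge_iff)
  obtain n0 where n0: "n0 < m*q" "x ! n0 \<noteq> y ! n0" "\<And>n. n < m*q \<Longrightarrow> n \<noteq> n0 \<Longrightarrow> x ! n = y ! n"
    using card1_diff[OF xy(4)] by metis
  obtain j c where jc: "j < q" "c < m" "n0 = j*m + c" using blk_cases[OF n0(1)] by metis
  define u' where "u' = map (\<lambda>t. if t = j then False else bodd m x t) [0..<q]"
  define u'' where "u'' = u'[j := True]"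
  have lu: "length u' = q" "length u'' = q" by (auto simp: u'_def u''_def)
  have u'n: "u' ! t = (if t = j then False else bodd m x t)" if "t < q" for t
    using that by (simp add: u'_def)
  have u''n: "u'' ! t = (if t = j then True else bodd m x t)" if "t < q" for t
    using that lu by (simp add: u''_def u'n)
  define e where "e = {u', u''}"
  have "{i. i < q \<and> u' ! i \<noteq> u'' ! i} = {j}" using u'n u''n jc(1) by (auto split: if_splits)
  then have eE: "e \<in> edges (hypercube q)" unfolding hyp_edge_iff e_def using lu
    by (intro exI[of _ u'] exI[of _ u'']) simp
  obtain u0 u1 j' where E: "edge_ends e = (u0, u1)" "e = {u0, u1}" "length u0 = q" "length u1 = q"
    "j' < q" "u0 ! j' \<noteq> u1 ! j'" "\<And>t. t < q \<Longrightarrow> t \<noteq> j' \<Longrightarrow> u0 ! t = u1 ! t"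
    using hyp_edge_ends[OF eE] by metis
  have u0n: "u0 ! t = bodd m x t" if "t < q" "t \<noteq> j" for t
  proof -
    have "u0 = u' \<or> u0 = u''" using E(2) e_def by (auto simp: doubleton_eq_iff)
    then show ?thesis using u'n[OF that(1)] u''n[OF that(1)] that(2) by auto
  qed
  have u01: "u0 ! j \<noteq> u1 ! j"
  proof -
    have "(u0 = u' \<and> u1 = u'') \<or> (u0 = u'' \<and> u1 = u')" using E(2) e_def by (auto simp: doubleton_eq_iff)
    then show ?thesis using u'n[OF jc(1)] u''n[OF jc(1)] by auto
  qed
  have jj: "j' = j" using E(7)[OF jc(1)] u01 by auto
  define b where "b = u0 ! j"
  define Z where "Z = (\<lambda>s. x ! (j*m+s) \<noteq> (b \<noteq> (s < c)))"
  define Od where "Od = odd (cnt m Z)"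
  define A where "A = map (\<lambda>n. if n div m = j then (if Od then Z (n mod m) \<noteq> (n mod m = c) else Z (n mod m))
                         else x ! n \<noteq> u0 ! (n div m)) [0..<m*q]"
  have An: "A ! (t*m+s) = (if t = j then (if Od then Z s \<noteq> (s = c) else Z s) else x ! (t*m+s) \<noteq> u0 ! t)"
    if "t < q" "s < m" for t s
  proof -
    have "t*m+s < m*q" by (rule idx_lt[OF that])
    then have "A ! (t*m+s) = (if (t*m+s) div m = j then (if Od then Z ((t*m+s) mod m) \<noteq> ((t*m+s) mod m = c) else Z ((t*m+s) mod m))
                         else x ! (t*m+s) \<noteq> u0 ! ((t*m+s) div m))" unfolding A_def by simp
    then show ?thesis using that(2) by simp
  qed
  have AC: "A \<in> Copies m q"
    unfolding Copies_def
  proof (intro CollectI conjI allI impI)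
    show "length A = m*q" by (simp add: A_def)
    fix t assume t: "t < q"
    show "\<not> bodd m A t"
    proof (cases "t = j")
      case True
      show ?thesis
      proof (cases Od)
        case True
        have "odd (cnt m (\<lambda>s. A ! (t*m+s))) \<longleftrightarrow> \<not> odd (cnt m Z)"
          by (rule cnt_flip1[OF jc(2)]) (use An[OF t] \<open>t = j\<close> True jc(2) in auto)
        then show ?thesis using True Od_def unfolding bodd_def by simp
      next
        case False
        have "cnt m (\<lambda>s. A ! (t*m+s)) = cnt m Z"
          by (rule cnt_cong) (use An[OF t] \<open>t = j\<close> False in auto)
        then show ?thesis using False Od_def unfolding bodd_def by simp
      qed
    next
      case False
      have "odd (cnt m (\<lambda>s. A ! (t*m+s))) = (odd (cnt m (\<lambda>s. x ! (t*m+s))) \<noteq> u0 ! t)"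
        by (rule cnt_xor[OF assms(1)]) (use An[OF t] False in auto)
      then show ?thesis using u0n[OF t False] unfolding bodd_def by simp
    qed
  qed
  define W where "W = Qp m q A (u0,u1) c"
  define W' where "W' = Qp m q A (u0,u1) (Suc c)"
  have ynth: "y ! (t*m+s) = (x ! (t*m+s) \<noteq> (t = j \<and> s = c))" if "t < q" "s < m" for t s
  proof (cases "t = j \<and> s = c")
    case True then show ?thesis using n0(2) jc(3) by auto
  next
    case False
    then have "t*m+s \<noteq> n0" using jc(3) that(2) jc(2) by (metis idx_div idx_mod)
    then show ?thesis using n0(3)[OF idx_lt[OF that]] False by auto
  qed
  have Wn: "W ! (t*m+s) = (if Od then y ! (t*m+s) else x ! (t*m+s))" if "t < q" "s < m" for t s
    unfolding W_def Qp_nth[OF that] fst_conv snd_conv An[OF that] ynth[OF that]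
    using E(7)[OF that(1)] jj u01 b_def Z_def by (auto simp: Z_def b_def)
  have W'n: "W' ! (t*m+s) = (if Od then x ! (t*m+s) else y ! (t*m+s))" if "t < q" "s < m" for t s
    unfolding W'_def Qp_nth[OF that] fst_conv snd_conv An[OF that] ynth[OF that]
    using E(7)[OF that(1)] jj u01 b_def Z_def by (auto simp: Z_def b_def)
  have WW: "{W, W'} = {x, y}"
  proof (cases Od)
    case True
    have "W = y" by (rule list_eq_blocks[of _ m q]) (use Wn True xy in \<open>auto simp: W_def\<close>)
    moreover have "W' = x" by (rule list_eq_blocks[of _ m q]) (use W'n True xy in \<open>auto simp: W'_def\<close>)
    ultimately show ?thesis by auto
  next
    case False
    have "W = x" by (rule list_eq_blocks[of _ m q]) (use Wn False xy in \<open>auto simp: W_def\<close>)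
    moreover have "W' = y" by (rule list_eq_blocks[of _ m q]) (use W'n False xy in \<open>auto simp: W'_def\<close>)
    ultimately show ?thesis by auto
  qed
  have "{stretch_pt m e c, stretch_pt m e (Suc c)} \<in> edges (stretch m (hypercube q))"
    unfolding stretch_edges using eE jc(2) by auto
  then have "phi m q A ` {stretch_pt m e c, stretch_pt m e (Suc c)} \<in> edges (Hc m q A)"
    unfolding Hc_edges by blast
  moreover have "phi m q A ` {stretch_pt m e c, stretch_pt m e (Suc c)} = g"
    using phi_pt[OF eE, of c m A] phi_pt[OF eE, of "Suc c" m A] jc(2) assms(2) WW xy(1) E(1)
    unfolding W_def W'_def by auto
  ultimately show ?thesis using AC by auto
qed

theorem proposition1:
  fixes m q :: nat
  assumes "odd m" and "m > 0" and "q \<ge> 1"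
  shows "graph_divides (stretch m (hypercube q)) (hypercube (m * q))"
  unfolding graph_divides_def
proof (intro exI[of _ "Hc m q ` Copies m q"] conjI)
  show "\<forall>Hi\<in>Hc m q ` Copies m q. subgraph Hi (hypercube (m*q)) \<and> isomorphic (stretch m (hypercube q)) Hi"
    using Hc_sub[OF assms(2)] Hc_iso[OF assms(2)] by auto
next
  show "\<forall>Hi\<in>Hc m q ` Copies m q. \<forall>Hj\<in>Hc m q ` Copies m q. Hi \<noteq> Hj \<longrightarrow> edges Hi \<inter> edges Hj = {}"
  proof (intro ballI impI)
    fix Hi Hj assume "Hi \<in> Hc m q ` Copies m q" "Hj \<in> Hc m q ` Copies m q" "Hi \<noteq> Hj"
    then obtain A A' where "A \<in> Copies m q" "A' \<in> Copies m q" "Hi = Hc m q A" "Hj = Hc m q A'" by auto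
    then show "edges Hi \<inter> edges Hj = {}" using uniq[OF assms(1,2)] \<open>Hi \<noteq> Hj\<close> by blast
  qed
next
  show "\<Union> (edges ` Hc m q ` Copies m q) = edges (hypercube (m * q))"
  proof
    show "\<Union> (edges ` Hc m q ` Copies m q) \<subseteq> edges (hypercube (m * q))"
      using Hc_sub[OF assms(2)] unfolding subgraph_def by blast
    show "edges (hypercube (m * q)) \<subseteq> \<Union> (edges ` Hc m q ` Copies m q)"
      using cover[OF assms(1,2)] by blast
  qed
qed

end
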